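(* For every positive integer $n$ there exists a nearly finitary matroid $M$ whose finitarization spectrum $\mathrm{Spec}(M)$ is a finite set with $|\mathrm{Spec}(M)|\ge n$. (That is, there exist nearly finitary matroids with finitarization spectrum of arbitrarily large finite size.)
   Context: A matroid $M=(E,\mathcal{L})$ consists of a (possibly infinite) set $E$ and a family $\mathcal{L}\subseteq 2^E$ of independent sets such that: (I1) $\emptyset\in\mathcal{L}$; (I2) subsets of independent sets are independent; (I3) if $B$ is a maximal element of $\mathcal{L}$ and $A\in\mathcal{L}$ is not maximal, there is $b\in B\setminus A$ with $A\cup\{b\}\in\mathcal{L}$; (I4) if $A\in\mathcal{L}$ and $A\subseteq X\subseteq E$, then $\{S\in\mathcal{L}: A\subseteq S\subseteq X\}$ has a maximal element. Bases are maximal independent sets. The finitarization $M^{\mathrm{fin}}=(E,\mathcal{L}^{\mathrm{fin}})$ has as independent sets all $S\subseteq E$ whose finite subsets all lie in $\mathcal{L}$; it is a matroid. $M$ is nearly finitary if whenever a base $F$ of $M^{\mathrm{fin}}$ contains a base $B$ of $M$, the set $F\setminus B$ is finite. The finitarization spectrum is $\mathrm{Spec}(M)=\{|F\setminus B| : B\subseteq F,\ F \text{ a base of } M^{\mathrm{fin}},\ B \text{ a base of } M\}$, where all infinite cardinalities are identified with a single value $\infty$. *)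

theory Defs
  imports Main "HOL-Library.Extended_Nat"
begin

definition maximal_in :: "'a set set \<Rightarrow> 'a set \<Rightarrow> bool" where
  "maximal_in F S \<longleftrightarrow> S \<in> F \<and> (\<forall>T\<in>F. S \<subseteq> T \<longrightarrow> T = S)"

definition matroid :: "'a set \<Rightarrow> 'a set set \<Rightarrow> bool" where
  "matroid E L \<longleftrightarrow>
     (\<forall>S\<in>L. S \<subseteq> E) \<and>
     {} \<in> L \<and>
     (\<forall>A B. A \<in> L \<longrightarrow> B \<subseteq> A \<longrightarrow> B \<in> L) \<and>
     (\<forall>A B. maximal_in L B \<longrightarrow> A \<in> L \<longrightarrow> \<not> maximal_in L A \<longrightarrow>
        (\<exists>b\<in>B - A. insert b A \<in> L)) \<and>
     (\<forall>A X. A \<in> L \<longrightarrow> A \<subseteq> X \<longrightarrow> X \<subseteq> E \<longrightarrow>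
        (\<exists>S. maximal_in {S \<in> L. A \<subseteq> S \<and> S \<subseteq> X} S))"

definition base :: "'a set set \<Rightarrow> 'a set \<Rightarrow> bool" where
  "base L B \<longleftrightarrow> maximal_in L B"

definition fin_indep :: "'a set \<Rightarrow> 'a set set \<Rightarrow> 'a set set" where
  "fin_indep E L = {S. S \<subseteq> E \<and> (\<forall>T. T \<subseteq> S \<longrightarrow> finite T \<longrightarrow> T \<in> L)}"

definition nearly_finitary :: "'a set \<Rightarrow> 'a set set \<Rightarrow> bool" where
  "nearly_finitary E L \<longleftrightarrow>
     (\<forall>F B. base (fin_indep E L) F \<longrightarrow> base L B \<longrightarrow> B \<subseteq> F \<longrightarrow> finite (F - B))"

definition ecard :: "'a set \<Rightarrow> enat" where
  "ecard X = (if finite X then enat (card X) else \<infinity>)"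

definition fin_spectrum :: "'a set \<Rightarrow> 'a set set \<Rightarrow> enat set" where
  "fin_spectrum E L = {ecard (F - B) | F B.
      base (fin_indep E L) F \<and> base L B \<and> B \<subseteq> F}"

end

theory Submission
  imports Defs "HOL-Library.Nat_Bijection"
begin

definition rr :: "nat \<Rightarrow> nat \<Rightarrow> nat set" where "rr b k = {prod_encode (b, 2*k)}"
definition ss :: "nat \<Rightarrow> nat \<Rightarrow> nat set" where "ss b k = {prod_encode (b, Suc (2*k))}"

lemma rr_eq[simp]: "rr b k = rr b' k' \<longleftrightarrow> b = b' \<and> k = k'"
  by (auto simp: rr_def)
lemma ss_eq[simp]: "ss b k = ss b' k' \<longleftrightarrow> b = b' \<and> k = k'"
  by (auto simp: ss_def)
lemma rr_ss[simp]: "rr b k \<noteq> ss b' k'" "ss b' k' \<noteq> rr b k"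
  by (auto simp: rr_def ss_def) presburger+

definition EE :: "nat \<Rightarrow> nat set set" where
  "EE m = {rr b k | b k. b < m} \<union> {ss b k | b k. b < m}"
definition pc :: "nat set set \<Rightarrow> bool" where
  "pc S \<longleftrightarrow> (\<forall>b i j. ss b i \<in> S \<longrightarrow> ss b j \<in> S \<longrightarrow> i < j \<longrightarrow> (\<exists>k. i \<le> k \<and> k < j \<and> rr b k \<notin> S))"
definition tc :: "nat set set \<Rightarrow> bool" where
  "tc S \<longleftrightarrow> (\<forall>b i. ss b i \<in> S \<longrightarrow> (\<exists>k\<ge>i. rr b k \<notin> S))"
definition LL :: "nat \<Rightarrow> nat set set set" where
  "LL m = {S. S \<subseteq> EE m \<and> pc S \<and> tc S}"

lemma rr_EE[simp]: "rr b k \<in> EE m \<longleftrightarrow> b < m" by (auto simp: EE_def)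
lemma ss_EE[simp]: "ss b k \<in> EE m \<longleftrightarrow> b < m" by (auto simp: EE_def)
lemma EE_cases: assumes "e \<in> EE m"
  obtains b k where "b < m" "e = rr b k" | b k where "b < m" "e = ss b k"
  using assms by (auto simp: EE_def)

lemma LL_iff: "S \<in> LL m \<longleftrightarrow> S \<subseteq> EE m \<and> pc S \<and> tc S" by (simp add: LL_def)

lemma pcD: assumes "pc S" "ss b i \<in> S" "ss b j \<in> S" "i < j"
  obtains k where "i \<le> k" "k < j" "rr b k \<notin> S"
  using assms unfolding pc_def by blast
lemma tcD: assumes "tc S" "ss b i \<in> S"
  obtains k where "i \<le> k" "rr b k \<notin> S"
  using assms unfolding tc_def by blast
lemma LL_pcD: assumes "S \<in> LL m" "ss b i \<in> S" "ss b j \<in> S" "i < j"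
  obtains k where "i \<le> k" "k < j" "rr b k \<notin> S"
  using assms pcD unfolding LL_iff by blast
lemma LL_tcD: assumes "S \<in> LL m" "ss b i \<in> S"
  obtains k where "i \<le> k" "rr b k \<notin> S"
  using assms tcD unfolding LL_iff by blast

lemma add_r_before:
  assumes "A \<in> LL m" "b < m" "rr b q \<notin> A"
    "\<forall>j\<le>q. ss b j \<in> A \<longrightarrow> (\<exists>k'. j \<le> k' \<and> k' < q \<and> rr b k' \<notin> A)"
  shows "insert (rr b q) A \<in> LL m"
proof -
  have "pc (insert (rr b q) A)"
    unfolding pc_def
  proof (intro allI impI)
    fix b' i j assume h: "ss b' i \<in> insert (rr b q) A" "ss b' j \<in> insert (rr b q) A" "i < j"
    then have "ss b' i \<in> A" "ss b' j \<in> A" by auto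
    then obtain k where k: "i \<le> k" "k < j" "rr b' k \<notin> A" using assms(1) h(3) by (meson LL_pcD)
    show "\<exists>k. i \<le> k \<and> k < j \<and> rr b' k \<notin> insert (rr b q) A"
    proof (cases "b' = b \<and> k = q")
      case True
      then obtain k' where "i \<le> k'" "k' < q" "rr b k' \<notin> A" using assms(4) \<open>ss b' i \<in> A\<close> k by auto
      then show ?thesis using True k by (intro exI[of _ k']) auto
    qed (use k in auto)
  qed
  moreover have "tc (insert (rr b q) A)"
    unfolding tc_def
  proof (intro allI impI)
    fix b' i assume h: "ss b' i \<in> insert (rr b q) A"
    then have "ss b' i \<in> A" by auto
    then obtain k where k: "i \<le> k" "rr b' k \<notin> A" using assms(1) by (meson LL_tcD)
    show "\<exists>k\<ge>i. rr b' k \<notin> insert (rr b q) A"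
    proof (cases "b' = b \<and> k = q")
      case True
      then obtain k' where "i \<le> k'" "k' < q" "rr b k' \<notin> A" using assms(4) \<open>ss b' i \<in> A\<close> k by auto
      then show ?thesis using True k by (intro exI[of _ k']) auto
    qed (use k in auto)
  qed
  ultimately show ?thesis using assms by (auto simp: LL_iff)
qed

lemma add_r_after:
  assumes "A \<in> LL m" "b < m" "q < k" "rr b k \<notin> A"
    "\<forall>k'. q < k' \<and> k' < k \<longrightarrow> rr b k' \<in> A" "\<forall>j. q < j \<and> j \<le> k \<longrightarrow> ss b j \<notin> A"
  shows "insert (rr b q) A \<in> LL m"
proof -
  have "pc (insert (rr b q) A)"
    unfolding pc_def
  proof (intro allI impI)
    fix b' i j assume h: "ss b' i \<in> insert (rr b q) A" "ss b' j \<in> insert (rr b q) A" "i < j"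
    then have "ss b' i \<in> A" "ss b' j \<in> A" by auto
    then obtain k0 where k: "i \<le> k0" "k0 < j" "rr b' k0 \<notin> A" using assms(1) h(3) by (meson LL_pcD)
    show "\<exists>k. i \<le> k \<and> k < j \<and> rr b' k \<notin> insert (rr b q) A"
    proof (cases "b' = b \<and> k0 = q")
      case True
      have "k < j"
      proof (rule ccontr)
        assume "\<not> k < j"
        then show False using assms(6) True k \<open>ss b' j \<in> A\<close> by auto
      qed
      then show ?thesis using True k assms(3,4) by (intro exI[of _ k]) auto
    qed (use k in auto)
  qed
  moreover have "tc (insert (rr b q) A)"
    unfolding tc_def
  proof (intro allI impI)
    fix b' i assume h: "ss b' i \<in> insert (rr b q) A"
    then have "ss b' i \<in> A" by auto
    then obtain k0 where k: "i \<le> k0" "rr b' k0 \<notin> A" using assms(1) by (meson LL_tcD)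
    show "\<exists>k\<ge>i. rr b' k \<notin> insert (rr b q) A"
    proof (cases "b' = b \<and> k0 = q")
      case True
      then show ?thesis using True k assms(3,4) by (intro exI[of _ k]) auto
    qed (use k in auto)
  qed
  ultimately show ?thesis using assms by (auto simp: LL_iff)
qed

lemma add_s:
  assumes "A \<in> LL m" "b < m"
    "\<exists>k\<ge>j. rr b k \<notin> A"
    "\<forall>j'. ss b j' \<in> A \<longrightarrow> j' < j \<longrightarrow> (\<exists>k. j' \<le> k \<and> k < j \<and> rr b k \<notin> A)"
    "\<forall>j'. ss b j' \<in> A \<longrightarrow> j < j' \<longrightarrow> (\<exists>k. j \<le> k \<and> k < j' \<and> rr b k \<notin> A)"
  shows "insert (ss b j) A \<in> LL m"
proof -
  have "pc (insert (ss b j) A)"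
    unfolding pc_def
  proof (intro allI impI)
    fix b' i i' assume h: "ss b' i \<in> insert (ss b j) A" "ss b' i' \<in> insert (ss b j) A" "i < i'"
    show "\<exists>k. i \<le> k \<and> k < i' \<and> rr b' k \<notin> insert (ss b j) A"
    proof (cases "ss b' i \<in> A \<and> ss b' i' \<in> A")
      case True
      then obtain k where "i \<le> k" "k < i'" "rr b' k \<notin> A" using assms(1) h(3) by (meson LL_pcD)
      then show ?thesis by auto
    next
      case False
      then have "(b' = b \<and> i = j \<and> ss b i' \<in> A) \<or> (b' = b \<and> i' = j \<and> ss b i \<in> A)"
        using h by auto
      then show ?thesis using assms(4,5) h(3) by auto
    qed
  qed
  moreover have "tc (insert (ss b j) A)"
    unfolding tc_def
  proof (intro allI impI)
    fix b' i assume h: "ss b' i \<in> insert (ss b j) A"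
    show "\<exists>k\<ge>i. rr b' k \<notin> insert (ss b j) A"
    proof (cases "ss b' i \<in> A")
      case True
      then obtain k where "i \<le> k" "rr b' k \<notin> A" using assms(1) by (meson LL_tcD)
      then show ?thesis by auto
    next
      case False
      then show ?thesis using h assms(3) by auto
    qed
  qed
  ultimately show ?thesis using assms by (auto simp: LL_iff)
qed

lemma add_s_D:
  assumes "insert (ss b j) A \<in> LL m"
  shows "b < m" "\<exists>k\<ge>j. rr b k \<notin> A"
    "\<forall>j'. ss b j' \<in> A \<longrightarrow> j' < j \<longrightarrow> (\<exists>k. j' \<le> k \<and> k < j \<and> rr b k \<notin> A)"
    "\<forall>j'. ss b j' \<in> A \<longrightarrow> j < j' \<longrightarrow> (\<exists>k. j \<le> k \<and> k < j' \<and> rr b k \<notin> A)"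
proof -
  show "b < m" using assms by (auto simp: LL_iff)
  show "\<exists>k\<ge>j. rr b k \<notin> A"
    using LL_tcD[OF assms, of b j] by (metis insertCI insertE rr_ss(1))
  show "\<forall>j'. ss b j' \<in> A \<longrightarrow> j' < j \<longrightarrow> (\<exists>k. j' \<le> k \<and> k < j \<and> rr b k \<notin> A)"
  proof (intro allI impI)
    fix j' assume "ss b j' \<in> A" "j' < j"
    then obtain k where "j' \<le> k" "k < j" "rr b k \<notin> insert (ss b j) A"
      using LL_pcD[OF assms, of b j' j] by blast
    then show "\<exists>k. j' \<le> k \<and> k < j \<and> rr b k \<notin> A" by blast
  qed
  show "\<forall>j'. ss b j' \<in> A \<longrightarrow> j < j' \<longrightarrow> (\<exists>k. j \<le> k \<and> k < j' \<and> rr b k \<notin> A)"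
  proof (intro allI impI)
    fix j' assume "ss b j' \<in> A" "j < j'"
    then obtain k where "j \<le> k" "k < j'" "rr b k \<notin> insert (ss b j) A"
      using LL_pcD[OF assms, of b j j'] by blast
    then show "\<exists>k. j \<le> k \<and> k < j' \<and> rr b k \<notin> A" by blast
  qed
qed

lemma add_s_same_seg:
  assumes A: "A \<in> LL m" and si: "ss b i \<notin> A" and ins: "insert (ss b i) A \<in> LL m"
    and k: "i \<le> k" "rr b k \<notin> A" "\<forall>k'. i \<le> k' \<and> k' < k \<longrightarrow> rr b k' \<in> A"
    and j: "j \<le> k" "\<forall>k'. j \<le> k' \<and> k' < i \<longrightarrow> rr b k' \<in> A"
  shows "ss b j \<notin> A \<and> insert (ss b j) A \<in> LL m"
proof -
  note D = add_s_D[OF ins]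
  have F1: "\<exists>k'. j' \<le> k' \<and> k' < i \<and> rr b k' \<notin> A" if "ss b j' \<in> A" "j' < i" for j'
    using D(3) that by blast
  have F2: "k < j'" if hh: "ss b j' \<in> A" "i < j'" for j'
  proof -
    obtain k' where "i \<le> k'" "k' < j'" "rr b k' \<notin> A" using D(4) hh by blast
    then show ?thesis using k(3) by (meson le_less_trans not_le)
  qed
  have nj: "ss b j \<notin> A"
  proof
    assume a: "ss b j \<in> A"
    show False
    proof (cases "j < i")
      case True
      then show ?thesis using F1[OF a True] j(2) by auto
    next
      case False
      then show ?thesis using si a F2[OF a] j(1) by (cases "j = i") auto
    qed
  qed
  have "insert (ss b j) A \<in> LL m"
  proof (rule add_s[OF A D(1)])
    show "\<exists>k\<ge>j. rr b k \<notin> A" using k(2) j(1) by blast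
    show "\<forall>j'. ss b j' \<in> A \<longrightarrow> j' < j \<longrightarrow> (\<exists>k. j' \<le> k \<and> k < j \<and> rr b k \<notin> A)"
    proof (intro allI impI)
      fix j' assume a: "ss b j' \<in> A" "j' < j"
      have "j' \<noteq> i" using a si by auto
      show "\<exists>k. j' \<le> k \<and> k < j \<and> rr b k \<notin> A"
      proof (cases "j' < i")
        case True
        then obtain k' where "j' \<le> k'" "k' < i" "rr b k' \<notin> A" using F1 a by blast
        then show ?thesis using j(2) by (meson not_le)
      next
        case False
        then show ?thesis using F2[OF a(1)] \<open>j' \<noteq> i\<close> a(2) j(1) by auto
      qed
    qed
    show "\<forall>j'. ss b j' \<in> A \<longrightarrow> j < j' \<longrightarrow> (\<exists>k. j \<le> k \<and> k < j' \<and> rr b k \<notin> A)"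
    proof (intro allI impI)
      fix j' assume a: "ss b j' \<in> A" "j < j'"
      have "j' \<noteq> i" using a si by auto
      show "\<exists>k. j \<le> k \<and> k < j' \<and> rr b k \<notin> A"
      proof (cases "j' < i")
        case True
        then obtain k' where "j' \<le> k'" "k' < i" "rr b k' \<notin> A" using F1 a by blast
        then have False using j(2) a(2) by (meson dual_order.trans less_imp_le)
        then show ?thesis ..
      next
        case False
        then show ?thesis using F2[OF a(1)] \<open>j' \<noteq> i\<close> j(1) k(2) by (intro exI[of _ k]) auto
      qed
    qed
  qed
  then show ?thesis using nj by blast
qed

lemma LL_mono: assumes "T \<in> LL m" "S \<subseteq> T" shows "S \<in> LL m"
proof -
  have "pc S" using assms unfolding LL_iff pc_def by (meson in_mono)
  moreover have "tc S" using assms unfolding LL_iff tc_def by (meson in_mono)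
  ultimately show ?thesis using assms by (auto simp: LL_iff)
qed

lemma maxD: assumes "maximal_in (LL m) B" "x \<notin> B" shows "insert x B \<notin> LL m"
  using assms unfolding maximal_in_def by blast

lemma key:
  assumes B: "maximal_in (LL m) B" and A: "A \<in> LL m" and si: "ss b i \<notin> A"
    and ins: "insert (ss b i) A \<in> LL m"
  shows "\<exists>x\<in>B - A. insert x A \<in> LL m"
proof -
  note D = add_s_D[OF ins]
  have bm: "b < m" by (rule D(1))
  have BL: "B \<in> LL m" using B by (simp add: maximal_in_def)
  obtain k0 where k0: "i \<le> k0" "rr b k0 \<notin> A" using D(2) by blast
  define k where "k = (LEAST k. i \<le> k \<and> rr b k \<notin> A)"
  have k12: "i \<le> k \<and> rr b k \<notin> A" unfolding k_def by (rule LeastI[of _ k0]) (use k0 in auto)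
  have k3: "\<forall>k'. i \<le> k' \<and> k' < k \<longrightarrow> rr b k' \<in> A"
    unfolding k_def using not_less_Least by blast
  have F2: "k < j'" if hh: "ss b j' \<in> A" "i < j'" for j'
  proof -
    obtain k' where "i \<le> k'" "k' < j'" "rr b k' \<notin> A" using D(4) hh by blast
    then show ?thesis using k3 by (meson le_less_trans not_le)
  qed
  show ?thesis
  proof (cases "rr b k \<in> B")
    case True
    have "insert (rr b k) A \<in> LL m"
    proof (rule add_r_before[OF A bm])
      show "rr b k \<notin> A" using k12 by blast
      show "\<forall>j\<le>k. ss b j \<in> A \<longrightarrow> (\<exists>k'. j \<le> k' \<and> k' < k \<and> rr b k' \<notin> A)"
      proof (intro allI impI)
        fix j assume a: "j \<le> k" "ss b j \<in> A"
        have "j \<noteq> i" using a si by auto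
        show "\<exists>k'. j \<le> k' \<and> k' < k \<and> rr b k' \<notin> A"
        proof (cases "j < i")
          case True
          then obtain k' where "j \<le> k'" "k' < i" "rr b k' \<notin> A" using D(3) a by blast
          then show ?thesis using k12 by (intro exI[of _ k']) auto
        next
          case False
          then show ?thesis using F2[OF a(2)] \<open>j \<noteq> i\<close> a(1) by auto
        qed
      qed
    qed
    then show ?thesis using True k12 by blast
  next
    case False
    have "\<exists>j\<le>k. ss b j \<in> B \<and> (\<forall>k'. j \<le> k' \<and> k' < k \<longrightarrow> rr b k' \<in> B)"
    proof (rule ccontr)
      assume neg: "\<not> ?thesis"
      then have nk: "ss b k \<notin> B" by auto
      have "insert (ss b k) B \<in> LL m"
      proof (rule add_s[OF BL bm])
        show "\<exists>k'\<ge>k. rr b k' \<notin> B" using False by blast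
        show "\<forall>j'. ss b j' \<in> B \<longrightarrow> j' < k \<longrightarrow> (\<exists>k'. j' \<le> k' \<and> k' < k \<and> rr b k' \<notin> B)"
          using neg by (meson less_imp_le)
        show "\<forall>j'. ss b j' \<in> B \<longrightarrow> k < j' \<longrightarrow> (\<exists>k'. k \<le> k' \<and> k' < j' \<and> rr b k' \<notin> B)"
          using False by blast
      qed
      then show False using maxD[OF B nk] by blast
    qed
    then obtain j where j: "j \<le> k" "ss b j \<in> B" "\<forall>k'. j \<le> k' \<and> k' < k \<longrightarrow> rr b k' \<in> B"
      by blast
    show ?thesis
    proof (cases "\<forall>k'. j \<le> k' \<and> k' < i \<longrightarrow> rr b k' \<in> A")
      case True
      have "ss b j \<notin> A \<and> insert (ss b j) A \<in> LL m"
        by (rule add_s_same_seg[OF A si ins]) (use k12 k3 j True in auto)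
      then show ?thesis using j(2) by blast
    next
      case False
      then obtain q where q: "j \<le> q" "q < i" "rr b q \<notin> A" by blast
      define p where "p = (GREATEST p. j \<le> p \<and> p < i \<and> rr b p \<notin> A)"
      have p123: "j \<le> p \<and> p < i \<and> rr b p \<notin> A"
        unfolding p_def
      proof (rule GreatestI_nat[of _ q i])
        show "j \<le> q \<and> q < i \<and> rr b q \<notin> A" using q by blast
        show "\<And>y. j \<le> y \<and> y < i \<and> rr b y \<notin> A \<Longrightarrow> y \<le> i" by simp
      qed
      have p4: "\<forall>q'. p < q' \<and> q' < i \<longrightarrow> rr b q' \<in> A"
      proof (intro allI impI)
        fix q' assume a: "p < q' \<and> q' < i"
        show "rr b q' \<in> A"
        proof (rule ccontr)
          assume nq: "rr b q' \<notin> A"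
          have "q' \<le> p" unfolding p_def
          proof (rule Greatest_le_nat[of _ q' i])
            show "j \<le> q' \<and> q' < i \<and> rr b q' \<notin> A" using a p123 nq by linarith
            show "\<And>y. j \<le> y \<and> y < i \<and> rr b y \<notin> A \<Longrightarrow> y \<le> i" by simp
          qed
          then show False using a by auto
        qed
      qed
      have pB: "rr b p \<in> B" using j(3) p123 k12 by auto
      have "insert (rr b p) A \<in> LL m"
      proof (rule add_r_after[OF A bm])
        show "p < k" using p123 k12 by auto
        show "rr b k \<notin> A" using k12 by auto
        show "\<forall>k'. p < k' \<and> k' < k \<longrightarrow> rr b k' \<in> A"
          using p4 k3 by (meson not_le)
        show "\<forall>j'. p < j' \<and> j' \<le> k \<longrightarrow> ss b j' \<notin> A"
        proof (intro allI impI notI)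
          fix j' assume a: "p < j' \<and> j' \<le> k" "ss b j' \<in> A"
          show False
          proof (cases "j' < i")
            case True
            then obtain k'' where "j' \<le> k''" "k'' < i" "rr b k'' \<notin> A" using D(3) a by blast
            then show False using p4 a by auto
          next
            case False
            then show False using F2[OF a(2)] si a by (cases "j' = i") auto
          qed
        qed
      qed
      then show ?thesis using pB p123 by blast
    qed
  qed
qed

lemma red:
  assumes A: "A \<in> LL m" and x: "x \<notin> A" and ins: "insert x A \<in> LL m"
  shows "\<exists>b i. ss b i \<notin> A \<and> insert (ss b i) A \<in> LL m"
proof -
  have "x \<in> EE m" using ins by (auto simp: LL_iff)
  then show ?thesis
  proof (cases rule: EE_cases)
    case (2 b k)
    then show ?thesis using x ins by blast
  next
    case (1 b k)
    show ?thesis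
    proof (cases "\<forall>j\<le>k. ss b j \<in> A \<longrightarrow> (\<exists>k'. j \<le> k' \<and> k' < k \<and> rr b k' \<notin> A)")
      case True
      have nk: "ss b k \<notin> A" using True by auto
      have "insert (ss b k) A \<in> LL m"
      proof (rule add_s[OF A 1(1)])
        show "\<exists>k'\<ge>k. rr b k' \<notin> A" using x 1 by blast
        show "\<forall>j'. ss b j' \<in> A \<longrightarrow> j' < k \<longrightarrow> (\<exists>k'. j' \<le> k' \<and> k' < k \<and> rr b k' \<notin> A)"
          using True by (meson less_imp_le)
        show "\<forall>j'. ss b j' \<in> A \<longrightarrow> k < j' \<longrightarrow> (\<exists>k'. k \<le> k' \<and> k' < j' \<and> rr b k' \<notin> A)"
          using x 1 by blast
      qed
      then show ?thesis using nk by blast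
    next
      case False
      then obtain j where j: "j \<le> k" "ss b j \<in> A" "\<forall>k'. j \<le> k' \<and> k' < k \<longrightarrow> rr b k' \<in> A"
        by blast
      have insr: "insert (rr b k) A \<in> LL m" using ins 1 by simp
      obtain k1 where k1: "j \<le> k1" "rr b k1 \<notin> insert (rr b k) A"
        using LL_tcD[OF insr, of b j] j(2) by blast
      have k1': "k < k1"
      proof (rule ccontr)
        assume "\<not> k < k1"
        then have "k1 < k \<or> k1 = k" by linarith
        then show False using k1 j(3) by blast
      qed
      have k1'': "rr b k1 \<notin> A" using k1 by blast
      define k' where "k' = (LEAST q. k < q \<and> rr b q \<notin> A)"
      have k'12: "k < k' \<and> rr b k' \<notin> A" unfolding k'_def by (rule LeastI[of _ k1]) (use k1' k1'' in blast)
      have k'3: "\<forall>q. k < q \<and> q < k' \<longrightarrow> rr b q \<in> A"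
        unfolding k'_def using not_less_Least by blast
      have allin: "rr b q \<in> insert (rr b k) A" if "j \<le> q" "q < k'" for q
        proof -
        consider "q < k" | "q = k" | "k < q" by linarith
        then show ?thesis
        proof cases
          case 1 then show ?thesis using j(3) that by blast
        next
          case 2 then show ?thesis by blast
        next
          case 3 then show ?thesis using k'3 that by blast
        qed
      qed
      have nk': "ss b k' \<notin> A"
      proof
        assume "ss b k' \<in> A"
        moreover have "j < k'" using j(1) k'12 by linarith
        ultimately obtain q where "j \<le> q" "q < k'" "rr b q \<notin> insert (rr b k) A"
          using LL_pcD[OF insr, of b j k'] j(2) by blast
        then show False using allin by blast
      qed
      have "insert (ss b k') A \<in> LL m"
      proof (rule add_s[OF A 1(1)])
        show "\<exists>q\<ge>k'. rr b q \<notin> A" using k'12 by blast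
        show "\<forall>j'. ss b j' \<in> A \<longrightarrow> j' < k' \<longrightarrow> (\<exists>q. j' \<le> q \<and> q < k' \<and> rr b q \<notin> A)"
        proof (intro allI impI)
          fix j' assume a: "ss b j' \<in> A" "j' < k'"
          show "\<exists>q. j' \<le> q \<and> q < k' \<and> rr b q \<notin> A"
          proof (cases "j' < j")
            case True
            then obtain q where "j' \<le> q" "q < j" "rr b q \<notin> A" using LL_pcD[OF A a(1) j(2)] by blast
            then show ?thesis using j(1) k'12 by (intro exI[of _ q]) auto
          next
            case False
            show ?thesis
            proof (cases "j' = j")
              case True
              then show ?thesis using x 1 j(1) k'12 by (intro exI[of _ k]) auto
            next
              case False
              then have "j < j'" using \<open>\<not> j' < j\<close> by auto
              then obtain q where "j \<le> q" "q < j'" "rr b q \<notin> insert (rr b k) A"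
                using LL_pcD[OF insr, of b j j'] j(2) a(1) by blast
              moreover have "q < k'" using \<open>q < j'\<close> a(2) by linarith
              ultimately have False using allin by blast
              then show ?thesis ..
            qed
          qed
        qed
        show "\<forall>j'. ss b j' \<in> A \<longrightarrow> k' < j' \<longrightarrow> (\<exists>q. k' \<le> q \<and> q < j' \<and> rr b q \<notin> A)"
          using k'12 by blast
      qed
      then show ?thesis using nk' by blast
    qed
  qed
qed

lemma I3:
  assumes B: "maximal_in (LL m) B" and A: "A \<in> LL m" and nm: "\<not> maximal_in (LL m) A"
  shows "\<exists>x\<in>B - A. insert x A \<in> LL m"
proof -
  obtain T where T: "T \<in> LL m" "A \<subseteq> T" "T \<noteq> A" using nm A unfolding maximal_in_def by blast
  then obtain x where "x \<in> T" "x \<notin> A" by blast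
  then have "insert x A \<in> LL m" using LL_mono[OF T(1)] T(2) by blast
  then obtain b i where "ss b i \<notin> A" "insert (ss b i) A \<in> LL m" using red[OF A \<open>x \<notin> A\<close>] by blast
  then show ?thesis using key[OF B A] by blast
qed

lemma pc_mono: "pc T \<Longrightarrow> S \<subseteq> T \<Longrightarrow> pc S"
  unfolding pc_def by (meson in_mono)

lemma witness_finite: "finite ({ss b i, ss b j} \<union> rr b ` {i..<j})" by simp

lemma fin_char: "S \<in> fin_indep (EE m) (LL m) \<longleftrightarrow> S \<subseteq> EE m \<and> pc S"
proof
  assume a: "S \<in> fin_indep (EE m) (LL m)"
  then have SE: "S \<subseteq> EE m" and fin: "\<And>T. T \<subseteq> S \<Longrightarrow> finite T \<Longrightarrow> T \<in> LL m"
    by (auto simp: fin_indep_def)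
  have "pc S" unfolding pc_def
  proof (intro allI impI)
    fix b i j assume h: "ss b i \<in> S" "ss b j \<in> S" "i < j"
    show "\<exists>k. i \<le> k \<and> k < j \<and> rr b k \<notin> S"
    proof (rule ccontr)
      assume "\<not> ?thesis"
      then have sub: "{ss b i, ss b j} \<union> rr b ` {i..<j} \<subseteq> S" using h by auto
      have "{ss b i, ss b j} \<union> rr b ` {i..<j} \<in> LL m" by (rule fin[OF sub witness_finite])
      then obtain k where "i \<le> k" "k < j" "rr b k \<notin> {ss b i, ss b j} \<union> rr b ` {i..<j}"
        using LL_pcD[of _ m b i j] h(3) by blast
      then show False by auto
    qed
  qed
  then show "S \<subseteq> EE m \<and> pc S" using SE by blast
next
  assume a: "S \<subseteq> EE m \<and> pc S"
  show "S \<in> fin_indep (EE m) (LL m)"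
    unfolding fin_indep_def
  proof (intro CollectI conjI allI impI)
    show "S \<subseteq> EE m" using a by blast
    fix T assume T: "T \<subseteq> S" "finite T"
    have "tc T" unfolding tc_def
    proof (intro allI impI)
      fix b i assume "ss b i \<in> T"
      have "finite (rr b -` T)" using T(2) by (rule finite_vimageI) (simp add: inj_on_def)
      then obtain k where "k \<notin> rr b -` T" "i \<le> k"
        using infinite_nat_iff_unbounded_le by (meson finite_nat_set_iff_bounded_le le_trans nat_le_linear not_less_eq_eq)
      then show "\<exists>k\<ge>i. rr b k \<notin> T" by auto
    qed
    then show "T \<in> LL m" using a T pc_mono by (auto simp: LL_iff)
  qed
qed

lemma zorn_pc:
  assumes "A \<subseteq> X" and that: "pc A"
  shows "\<exists>M\<in>{S. pc S \<and> A \<subseteq> S \<and> S \<subseteq> X}. \<forall>Y\<in>{S. pc S \<and> A \<subseteq> S \<and> S \<subseteq> X}. M \<subseteq> Y \<longrightarrow> Y = M"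
proof (rule subset_Zorn_nonempty)
  show "{S. pc S \<and> A \<subseteq> S \<and> S \<subseteq> X} \<noteq> {}" using that assms by blast
next
  fix C assume C: "C \<noteq> {}" "subset.chain {S. pc S \<and> A \<subseteq> S \<and> S \<subseteq> X} C"
  have CS: "C \<subseteq> {S. pc S \<and> A \<subseteq> S \<and> S \<subseteq> X}" using C(2) by (simp add: subset.chain_def)
  have "pc (\<Union>C)" unfolding pc_def
  proof (intro allI impI)
    fix b i j assume h: "ss b i \<in> \<Union>C" "ss b j \<in> \<Union>C" "i < j"
    show "\<exists>k. i \<le> k \<and> k < j \<and> rr b k \<notin> \<Union>C"
    proof (rule ccontr)
      assume "\<not> ?thesis"
      then have sub: "{ss b i, ss b j} \<union> rr b ` {i..<j} \<subseteq> \<Union>C" using h by auto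
      obtain B0 where B0: "B0 \<in> C" "{ss b i, ss b j} \<union> rr b ` {i..<j} \<subseteq> B0"
        using finite_subset_Union_chain[OF witness_finite sub C(1) C(2)] by blast
      have "pc B0" using B0(1) CS by blast
      moreover have "ss b i \<in> B0" "ss b j \<in> B0" using B0(2) by auto
      ultimately obtain k where "i \<le> k" "k < j" "rr b k \<notin> B0" using h(3) pcD by metis
      moreover have "rr b k \<in> rr b ` {i..<j}" using \<open>i \<le> k\<close> \<open>k < j\<close> by simp
      ultimately show False using B0(2) by blast
    qed
  qed
  then show "\<Union>C \<in> {S. pc S \<and> A \<subseteq> S \<and> S \<subseteq> X}" using C(1) CS by blast
qed

lemma I4:
  assumes A: "A \<in> LL m" and AX: "A \<subseteq> X" and XE: "X \<subseteq> EE m"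
  shows "\<exists>S. maximal_in {S \<in> LL m. A \<subseteq> S \<and> S \<subseteq> X} S"
proof -
  have pcA: "pc A" using A by (simp add: LL_iff)
  obtain M where M: "pc M" "A \<subseteq> M" "M \<subseteq> X"
    and Mmax: "\<And>Y. pc Y \<Longrightarrow> A \<subseteq> Y \<Longrightarrow> Y \<subseteq> X \<Longrightarrow> M \<subseteq> Y \<Longrightarrow> Y = M"
  proof -
    from zorn_pc[OF AX pcA] obtain M where M1: "M \<in> {S. pc S \<and> A \<subseteq> S \<and> S \<subseteq> X}"
      and M2: "\<forall>Y\<in>{S. pc S \<and> A \<subseteq> S \<and> S \<subseteq> X}. M \<subseteq> Y \<longrightarrow> Y = M" by (rule bexE)
    have "pc M" "A \<subseteq> M" "M \<subseteq> X" using M1 by simp_all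
    moreover have "\<And>Y. pc Y \<Longrightarrow> A \<subseteq> Y \<Longrightarrow> Y \<subseteq> X \<Longrightarrow> M \<subseteq> Y \<Longrightarrow> Y = M"
      using M2 by simp
    ultimately show ?thesis using that by metis
  qed
  define V where "V b \<longleftrightarrow> (\<exists>t. ss b t \<in> M \<and> (\<forall>k\<ge>t. rr b k \<in> M))" for b
  define tt where "tt b = (SOME t. ss b t \<in> M \<and> (\<forall>k\<ge>t. rr b k \<in> M))" for b
  define kk where "kk b = (LEAST k. tt b \<le> k \<and> rr b k \<notin> A)" for b
  define dd where "dd b = (if ss b (tt b) \<notin> A then ss b (tt b) else rr b (kk b))" for b
  define D where "D = {dd b | b. V b}"
  define S where "S = M - D"
  have tt: "ss b (tt b) \<in> M \<and> (\<forall>k\<ge>tt b. rr b k \<in> M)" if "V b" for b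
    using someI_ex[OF that[unfolded V_def]] unfolding tt_def by blast
  have kk: "tt b \<le> kk b \<and> rr b (kk b) \<notin> A" if hA: "ss b (tt b) \<in> A" for b
  proof -
    obtain k where "tt b \<le> k" "rr b k \<notin> A" using LL_tcD[OF A hA] by blast
    then show ?thesis unfolding kk_def by (rule LeastI[of _ k, OF conjI])
  qed
  have ddA: "dd b \<notin> A" for b
    using kk[of b] unfolding dd_def by (cases "ss b (tt b) \<in> A") simp_all
  have D_rr: "V b \<and> dd b = rr b k" if hD: "rr b k \<in> D" for b k
  proof -
    obtain b' where b': "V b'" "rr b k = dd b'" using hD unfolding D_def by blast
    then have "b' = b" unfolding dd_def by (cases "ss b' (tt b') \<in> A") simp_all
    then show ?thesis using b' by simp
  qed
  have D_ss: "V b \<and> dd b = ss b k \<and> k = tt b \<and> ss b (tt b) \<notin> A" if hD: "ss b k \<in> D" for b k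
  proof -
    obtain b' where b': "V b'" "ss b k = dd b'" using hD unfolding D_def by blast
    then have bb: "b' = b" unfolding dd_def by (cases "ss b' (tt b') \<in> A") simp_all
    have "ss b' (tt b') \<notin> A" using b'(2) unfolding dd_def by (cases "ss b' (tt b') \<in> A") simp_all
    moreover have "k = tt b'" using b'(2) unfolding dd_def by (cases "ss b' (tt b') \<in> A") simp_all
    ultimately show ?thesis using b' bb unfolding dd_def by simp
  qed
  have ddD: "dd b \<in> D" if "V b" for b using that unfolding D_def by blast
  have AS: "A \<subseteq> S" using M(2) ddA unfolding S_def D_def by blast
  have SX: "S \<subseteq> X" using M(3) unfolding S_def by blast
  have pairM: False if hp: "V b" "ss b j \<in> M" "tt b < j" for b j
  proof -
    obtain k where "tt b \<le> k" "k < j" "rr b k \<notin> M" using pcD[OF M(1) _ hp(2) hp(3)] tt[OF hp(1)] by blast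
    then show False using tt[OF hp(1)] by blast
  qed
  have SL: "S \<in> LL m"
  proof -
    have "pc S" using pc_mono[OF M(1)] unfolding S_def by blast
    moreover have "tc S" unfolding tc_def
    proof (intro allI impI)
      fix b i assume si: "ss b i \<in> S"
      then have siM: "ss b i \<in> M" and siD: "ss b i \<notin> D" unfolding S_def by blast+
      show "\<exists>k\<ge>i. rr b k \<notin> S"
      proof (cases "V b")
        case False
        then obtain k where "k \<ge> i" "rr b k \<notin> M" using siM unfolding V_def by blast
        then show ?thesis unfolding S_def by blast
      next
        case True
        consider "i < tt b" | "tt b < i" | "i = tt b" by linarith
        then show ?thesis
        proof cases
          case 1
          obtain k where "i \<le> k" "k < tt b" "rr b k \<notin> M" using pcD[OF M(1) siM _ 1] tt[OF True] by blast
          then show ?thesis unfolding S_def by blast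
        next
          case 2
          then show ?thesis using pairM[OF True siM] by blast
        next
          case 3
          have "dd b \<noteq> ss b (tt b)" using ddD[OF True] siD 3 by metis
          then have "ss b (tt b) \<in> A" unfolding dd_def by metis
          then have "dd b = rr b (kk b)" "tt b \<le> kk b" using kk unfolding dd_def by simp_all
          moreover have "rr b (kk b) \<in> D" using ddD[OF True] calculation(1) by simp
          ultimately show ?thesis using 3 unfolding S_def by blast
        qed
      qed
    qed
    ultimately show ?thesis using SX XE unfolding LL_iff by blast
  qed
  have "maximal_in {S \<in> LL m. A \<subseteq> S \<and> S \<subseteq> X} S"
    unfolding maximal_in_def
  proof (intro conjI ballI impI)
    show "S \<in> {S \<in> LL m. A \<subseteq> S \<and> S \<subseteq> X}" using SL AS SX by blast
    fix T assume T: "T \<in> {S \<in> LL m. A \<subseteq> S \<and> S \<subseteq> X}" "S \<subseteq> T"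
    show "T = S"
    proof (rule ccontr)
      assume "T \<noteq> S"
      then obtain e where e: "e \<in> T" "e \<notin> S" using T(2) by blast
      have eX: "e \<in> X" using e T by blast
      have ins: "insert e S \<in> LL m" using LL_mono[of T m "insert e S"] T e by blast
      show False
      proof (cases "e \<in> D")
        case True
        then obtain b where Vb: "V b" and eb: "e = dd b" unfolding D_def by blast
        note ttb = tt[OF Vb]
        have s_in: "ss b (tt b) \<in> insert e S"
        proof (cases "dd b = ss b (tt b)")
          case True then show ?thesis using eb by simp
        next
          case False
          then have "ss b (tt b) \<notin> D" using D_ss by blast
          then show ?thesis using ttb unfolding S_def by blast
        qed
        have r_in: "rr b k \<in> insert e S" if "tt b \<le> k" for k
        proof (cases "rr b k \<in> D")
          case True then show ?thesis using D_rr[OF True] eb by simp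
        next
          case False then show ?thesis using ttb that unfolding S_def by blast
        qed
        obtain k where "tt b \<le> k" "rr b k \<notin> insert e S" using LL_tcD[OF ins s_in] by blast
        then show False using r_in by blast
      next
        case False
        then have eM: "e \<notin> M" using e unfolding S_def by blast
        have "\<not> pc (insert e M)"
        proof
          assume "pc (insert e M)"
          then have "insert e M = M" using Mmax[of "insert e M"] M eX by blast
          then show False using eM by blast
        qed
        then obtain b i j where w: "ss b i \<in> insert e M" "ss b j \<in> insert e M" "i < j"
          "\<And>k. i \<le> k \<Longrightarrow> k < j \<Longrightarrow> rr b k \<in> insert e M"
          unfolding pc_def by blast
        define W where "W = {ss b i, ss b j} \<union> rr b ` {i..<j}"
        have rin: "rr b k \<in> insert e M" if "k \<in> {i..<j}" for k using w(4) that by simp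
        have WM: "W \<subseteq> insert e M" unfolding W_def using w(1,2) rin by (simp add: image_subset_iff)
        have eW: "e \<in> W"
        proof (rule ccontr)
          assume "e \<notin> W"
          then have WM': "W \<subseteq> M" using WM by blast
          then have "ss b i \<in> M" "ss b j \<in> M" unfolding W_def by blast+
          then obtain k where k: "i \<le> k" "k < j" "rr b k \<notin> M"
            using pcD[OF M(1) _ _ w(3)] by metis
          then have "rr b k \<in> W" unfolding W_def by simp
          then show False using WM' k(3) by blast
        qed
        show False
        proof (cases "W \<inter> D = {}")
          case True
          then have WS: "W \<subseteq> insert e S" using WM unfolding S_def by blast
          then have "ss b i \<in> insert e S" "ss b j \<in> insert e S" unfolding W_def by blast+
          then obtain k where k: "i \<le> k" "k < j" "rr b k \<notin> insert e S"
            using LL_pcD[OF ins _ _ w(3)] by metis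
          then have "rr b k \<in> W" unfolding W_def by simp
          then show False using WS k(3) by blast
        next
          case False
          then obtain x where x: "x \<in> W" "x \<in> D" by blast
          have Vb: "V b" using x D_rr D_ss unfolding W_def by blast
          note ttb = tt[OF Vb]
          show False
          proof (cases "ss b (tt b) \<in> A")
            case False
            then have ddb: "dd b = ss b (tt b)" unfolding dd_def by simp
            have nrD: "rr b k \<notin> D" for k using D_rr ddb by (metis rr_ss(1))
            have "x = ss b i \<or> x = ss b j" using x nrD unfolding W_def by blast
            then have tij: "tt b = i \<or> tt b = j" using x(2) D_ss by blast
            have rS: "rr b k \<in> insert e S" if "rr b k \<in> insert e M" for k
              using that nrD unfolding S_def by blast
            show False
            proof (cases "\<exists>j'. e = ss b j'")
              case True
              then obtain j' where ej: "e = ss b j'" by blast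
              have "j' = i \<or> j' = j" using eW ej unfolding W_def by (simp add: image_iff)
              moreover have "j' \<noteq> tt b" using ej eM ttb by blast
              ultimately have jj: "(j' = i \<and> tt b = j) \<or> (j' = j \<and> tt b = i)"
                using tij w(3) by blast
              obtain k where k: "j' \<le> k" "rr b k \<notin> insert e S"
                using LL_tcD[OF ins, of b j'] ej by blast
              have "rr b k \<in> insert e M"
              proof (cases "tt b \<le> k")
                case True then show ?thesis using ttb by blast
              next
                case False
                have "i \<le> k \<and> k < j" using jj k(1) False w(3) by linarith
                then show ?thesis using w(4) by blast
              qed
              then show False using rS k(2) by blast
            next
              case False
              have ssM: "ss b i \<in> M" "ss b j \<in> M" using w False by blast+
              have "tt b \<noteq> i"
              proof
                assume "tt b = i"
                then show False using pairM[OF Vb ssM(2)] w(3) by simp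
              qed
              then have tj: "tt b = j" using tij by blast
              have "ss b i \<notin> D"
              proof
                assume "ss b i \<in> D"
                then have "i = tt b" using D_ss by blast
                then show False using tj w(3) by simp
              qed
              then have siS: "ss b i \<in> insert e S" using ssM unfolding S_def by blast
              obtain k where k: "i \<le> k" "rr b k \<notin> insert e S" using LL_tcD[OF ins siS] by blast
              have "rr b k \<in> insert e M"
              proof (cases "tt b \<le> k")
                case True then show ?thesis using ttb by blast
              next
                case False then show ?thesis using w(4) k(1) tj by simp
              qed
              then show False using rS k(2) by blast
            qed
          next
            case True
            then have ddb: "dd b = rr b (kk b)" unfolding dd_def by simp
            note kkb = kk[OF True]
            have nsD: "ss b k \<notin> D" for k using D_ss True by blast
            have "x \<in> rr b ` {i..<j}" using x nsD unfolding W_def by blast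
            then obtain k0 where k0: "x = rr b k0" "k0 \<in> {i..<j}" by blast
            then have k0': "i \<le> k0" "k0 < j" by simp_all
            have "dd b = rr b k0" using D_rr x(2) k0(1) by blast
            then have "k0 = kk b" using ddb by simp
            then have jt: "tt b < j" using kkb k0' by linarith
            have "ss b j \<notin> M" using pairM[OF Vb _ jt] by blast
            then have ej: "e = ss b j" using w(2) by blast
            obtain k where k: "j \<le> k" "rr b k \<notin> insert e S"
              using LL_tcD[OF ins, of b j] ej by blast
            have "tt b \<le> k" using k(1) jt by linarith
            then have "rr b k \<in> M" using ttb by blast
            moreover have "rr b k \<notin> D"
            proof
              assume "rr b k \<in> D"
              then have "dd b = rr b k" using D_rr by blast
              then have "k = kk b" using ddb by simp
              then show False using k(1) k0' \<open>k0 = kk b\<close> by linarith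
            qed
            ultimately show False using k(2) unfolding S_def by blast
          qed
        qed
      qed
    qed
  qed
  then show ?thesis by blast
qed

lemma matroid_LL: "matroid (EE m) (LL m)"
  unfolding matroid_def
proof (intro conjI allI impI ballI)
  show "S \<subseteq> EE m" if "S \<in> LL m" for S using that by (simp add: LL_iff)
  show "{} \<in> LL m" by (simp add: LL_iff pc_def tc_def)
  show "B \<in> LL m" if "A \<in> LL m" "B \<subseteq> A" for A B using LL_mono that by blast
  show "\<exists>b\<in>B - A. insert b A \<in> LL m" if "maximal_in (LL m) B" "A \<in> LL m" "\<not> maximal_in (LL m) A" for A B
    using I3 that by blast
  show "\<exists>S. maximal_in {S \<in> LL m. A \<subseteq> S \<and> S \<subseteq> X} S" if "A \<in> LL m" "A \<subseteq> X" "X \<subseteq> EE m" for A X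
    using I4 that by blast
qed

definition inb :: "nat \<Rightarrow> nat set \<Rightarrow> bool" where
  "inb b e \<longleftrightarrow> (\<exists>k. e = rr b k \<or> e = ss b k)"

lemma ins_LL:
  assumes B: "B \<in> LL m" and F: "F \<subseteq> EE m" "pc F" "B \<subseteq> F" and e: "e \<in> F" "inb b e"
    and tcb: "\<And>i. ss b i \<in> insert e B \<Longrightarrow> \<exists>k\<ge>i. rr b k \<notin> insert e B"
  shows "insert e B \<in> LL m"
proof -
  have sub: "insert e B \<subseteq> F" using F e by blast
  have "tc (insert e B)" unfolding tc_def
  proof (intro allI impI)
    fix b' i assume h: "ss b' i \<in> insert e B"
    show "\<exists>k\<ge>i. rr b' k \<notin> insert e B"
    proof (cases "b' = b")
      case True then show ?thesis using tcb h by blast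
    next
      case False
      then have "ss b' i \<in> B" using h e(2) unfolding inb_def by auto
      then obtain k where k: "i \<le> k" "rr b' k \<notin> B" using LL_tcD[OF B] by metis
      have "rr b' k \<noteq> e" using False e(2) unfolding inb_def by auto
      then show ?thesis using k by blast
    qed
  qed
  moreover have "pc (insert e B)" using pc_mono[OF F(2) sub] .
  ultimately show ?thesis using sub F(1) unfolding LL_iff by blast
qed

lemma block_unique:
  assumes F: "F \<subseteq> EE m" "pc F" and B: "maximal_in (LL m) B" "B \<subseteq> F"
    and e: "e1 \<in> F - B" "e2 \<in> F - B" "inb b e1" "inb b e2"
  shows "e1 = e2"
proof (rule ccontr)
  assume ne: "e1 \<noteq> e2"
  have BL: "B \<in> LL m" using B(1) by (simp add: maximal_in_def)
  obtain e3 where e3: "e3 \<in> F - B" "inb b e3"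
    and good: "\<And>e. e \<in> F - B \<Longrightarrow> inb b e \<Longrightarrow> e \<noteq> e3 \<Longrightarrow> insert e B \<in> LL m"
  proof (cases "\<exists>t. ss b t \<in> F \<and> (\<forall>k\<ge>t. rr b k \<in> F)")
    case False
    show ?thesis
    proof (rule that[OF e(1) e(3)])
      fix e assume h: "e \<in> F - B" "inb b e"
      show "insert e B \<in> LL m"
      proof (rule ins_LL[OF BL F B(2) _ h(2)])
        show "e \<in> F" using h by blast
        fix i assume "ss b i \<in> insert e B"
        then have "ss b i \<in> F" using h B(2) by blast
        then obtain k where "k \<ge> i" "rr b k \<notin> F" using False by blast
        then show "\<exists>k\<ge>i. rr b k \<notin> insert e B" using h B(2) by blast
      qed
    qed
  next
    case True
    then obtain t where t: "ss b t \<in> F" "\<And>k. t \<le> k \<Longrightarrow> rr b k \<in> F" by blast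
    have tcF: "\<exists>k\<ge>i. rr b k \<notin> F" if hi: "ss b i \<in> F" "i \<noteq> t" for i
    proof (cases "i < t")
      case True
      obtain k where "i \<le> k" "k < t" "rr b k \<notin> F" using pcD[OF F(2) hi(1) t(1) True] by blast
      then show ?thesis by blast
    next
      case False
      then have "t < i" using hi(2) by linarith
      obtain k where "t \<le> k" "k < i" "rr b k \<notin> F" using pcD[OF F(2) t(1) hi(1) \<open>t < i\<close>] by blast
      then show ?thesis using t(2) by blast
    qed
    show ?thesis
    proof (cases "ss b t \<in> B")
      case True
      obtain k where k: "t \<le> k" "rr b k \<notin> B" using LL_tcD[OF BL True] by blast
      show ?thesis
      proof (rule that[of "rr b k"])
        show "rr b k \<in> F - B" using k t(2) by blast
        show "inb b (rr b k)" unfolding inb_def by blast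
        fix e assume h: "e \<in> F - B" "inb b e" "e \<noteq> rr b k"
        show "insert e B \<in> LL m"
        proof (rule ins_LL[OF BL F B(2) _ h(2)])
          show "e \<in> F" using h by blast
          fix i assume hi: "ss b i \<in> insert e B"
          then have "ss b i \<in> F" using h B(2) by blast
          show "\<exists>k\<ge>i. rr b k \<notin> insert e B"
          proof (cases "i = t")
            case True then show ?thesis using k h(3) by blast
          next
            case False
            then obtain k' where "k' \<ge> i" "rr b k' \<notin> F" using tcF \<open>ss b i \<in> F\<close> by blast
            then show ?thesis using h B(2) by blast
          qed
        qed
      qed
    next
      case False
      show ?thesis
      proof (rule that[of "ss b t"])
        show "ss b t \<in> F - B" using False t(1) by blast
        show "inb b (ss b t)" unfolding inb_def by blast
        fix e assume h: "e \<in> F - B" "inb b e" "e \<noteq> ss b t"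
        show "insert e B \<in> LL m"
        proof (rule ins_LL[OF BL F B(2) _ h(2)])
          show "e \<in> F" using h by blast
          fix i assume hi: "ss b i \<in> insert e B"
          then have "ss b i \<in> F" using h B(2) by blast
          have "i \<noteq> t" using hi h(3) False by blast
          then obtain k' where "k' \<ge> i" "rr b k' \<notin> F" using tcF \<open>ss b i \<in> F\<close> by blast
          then show "\<exists>k\<ge>i. rr b k \<notin> insert e B" using h B(2) by blast
        qed
      qed
    qed
  qed
  obtain e where "e \<in> {e1, e2}" "e \<noteq> e3" using ne by blast
  then have "e \<in> F - B" "inb b e" "e \<noteq> e3" using e by blast+
  then have "insert e B \<in> LL m" using good by blast
  then show False using maxD[OF B(1)] \<open>e \<in> F - B\<close> by blast
qed

lemma diff_bound:
  assumes F: "F \<subseteq> EE m" "pc F" and B: "maximal_in (LL m) B" "B \<subseteq> F"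
  shows "finite (F - B) \<and> card (F - B) \<le> m"
proof -
  define g where "g b = (SOME e. e \<in> F - B \<and> inb b e)" for b
  have "F - B \<subseteq> g ` {..<m}"
  proof
    fix e assume e: "e \<in> F - B"
    then have "e \<in> EE m" using F by blast
    then obtain b where b: "b < m" "inb b e" unfolding inb_def by (cases rule: EE_cases) blast+
    then have ex: "\<exists>e. e \<in> F - B \<and> inb b e" using e by blast
    have "g b \<in> F - B \<and> inb b (g b)" unfolding g_def by (rule someI_ex[OF ex])
    then have "e = g b" using block_unique[OF F B e] b(2) by blast
    then show "e \<in> g ` {..<m}" using b(1) by blast
  qed
  moreover have "card (g ` {..<m}) \<le> m" using card_image_le[of "{..<m}" g] by simp
  ultimately show ?thesis using finite_subset card_mono by (metis finite_imageI finite_lessThan order_trans)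
qed

definition FF :: "nat \<Rightarrow> nat \<Rightarrow> nat set set" where
  "FF m j = {rr b k | b k. b < j} \<union> {ss b 0 | b. b < j} \<union> {ss b k | b k. j \<le> b \<and> b < m}"
definition BB :: "nat \<Rightarrow> nat \<Rightarrow> nat set set" where
  "BB m j = {rr b k | b k. b < j} \<union> {ss b k | b k. j \<le> b \<and> b < m}"

lemma rr_FF[simp]: "rr b k \<in> FF m j \<longleftrightarrow> b < j" by (auto simp: FF_def)
lemma ss_FF[simp]: "ss b k \<in> FF m j \<longleftrightarrow> (b < j \<and> k = 0) \<or> (j \<le> b \<and> b < m)" by (auto simp: FF_def)
lemma rr_BB[simp]: "rr b k \<in> BB m j \<longleftrightarrow> b < j" by (auto simp: BB_def)
lemma ss_BB[simp]: "ss b k \<in> BB m j \<longleftrightarrow> (j \<le> b \<and> b < m)" by (auto simp: BB_def)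

lemma FF_sub: "j \<le> m \<Longrightarrow> FF m j \<subseteq> EE m"
  unfolding FF_def by auto
lemma BB_sub: "j \<le> m \<Longrightarrow> BB m j \<subseteq> EE m"
  unfolding BB_def by auto

lemma BB_FF: "BB m j \<subseteq> FF m j" unfolding BB_def FF_def by blast

lemma FF_diff: "FF m j - BB m j = (\<lambda>b. ss b 0) ` {..<j}"
  unfolding FF_def BB_def by auto

lemma card_FF_diff: "card (FF m j - BB m j) = j"
proof -
  have "inj_on (\<lambda>b. ss b 0) {..<j}" by (simp add: inj_on_def)
  then show ?thesis unfolding FF_diff by (simp add: card_image)
qed

lemma pc_FF: "pc (FF m j)"
  unfolding pc_def
proof (intro allI impI)
  fix b i i' assume h: "ss b i \<in> FF m j" "ss b i' \<in> FF m j" "i < i'"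
  then have "j \<le> b" by auto
  then show "\<exists>k\<ge>i. k < i' \<and> rr b k \<notin> FF m j" using h(3) by (intro exI[of _ i]) simp
qed

lemma FF_base: assumes "j \<le> m" shows "base (fin_indep (EE m) (LL m)) (FF m j)"
  unfolding base_def maximal_in_def
proof (intro conjI ballI impI)
  show "FF m j \<in> fin_indep (EE m) (LL m)" using fin_char FF_sub[OF assms] pc_FF by blast
  fix T assume T: "T \<in> fin_indep (EE m) (LL m)" "FF m j \<subseteq> T"
  then have TE: "T \<subseteq> EE m" and pcT: "pc T" using fin_char by blast+
  show "T = FF m j"
  proof (rule ccontr)
    assume "T \<noteq> FF m j"
    then obtain x where x: "x \<in> T" "x \<notin> FF m j" using T(2) by blast
    then have "x \<in> EE m" using TE by blast
    then show False
    proof (cases rule: EE_cases)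
      case (1 b k)
      then have "j \<le> b" using x by simp
      then have "ss b k \<in> T" "ss b (Suc k) \<in> T" using T(2) 1 by auto
      then obtain k' where "k \<le> k'" "k' < Suc k" "rr b k' \<notin> T" using pcD[OF pcT] by (metis lessI)
      then show False using x 1 by (metis le_less_Suc_eq)
    next
      case (2 b k)
      then have "b < j" "k \<noteq> 0" using x by auto
      then have "ss b 0 \<in> T" using T(2) by auto
      then obtain k' where "0 \<le> k'" "k' < k" "rr b k' \<notin> T" using pcD[OF pcT] x 2 \<open>k \<noteq> 0\<close> by blast
      moreover have "rr b k' \<in> FF m j" using \<open>b < j\<close> by simp
      ultimately show False using T(2) by blast
    qed
  qed
qed

lemma BB_base: assumes "j \<le> m" shows "base (LL m) (BB m j)"
  unfolding base_def maximal_in_def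
proof (intro conjI ballI impI)
  have "pc (BB m j)" unfolding pc_def
  proof (intro allI impI)
    fix b i i' assume h: "ss b i \<in> BB m j" "ss b i' \<in> BB m j" "i < i'"
    then have "j \<le> b" by auto
    then show "\<exists>k\<ge>i. k < i' \<and> rr b k \<notin> BB m j" using h(3) by (intro exI[of _ i]) simp
  qed
  moreover have "tc (BB m j)" unfolding tc_def
  proof (intro allI impI)
    fix b i assume h: "ss b i \<in> BB m j"
    then have "j \<le> b" by auto
    then show "\<exists>k\<ge>i. rr b k \<notin> BB m j" by (intro exI[of _ i]) simp
  qed
  ultimately show "BB m j \<in> LL m" using BB_sub[OF assms] unfolding LL_iff by blast
  fix T assume T: "T \<in> LL m" "BB m j \<subseteq> T"
  show "T = BB m j"
  proof (rule ccontr)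
    assume "T \<noteq> BB m j"
    then obtain x where x: "x \<in> T" "x \<notin> BB m j" using T(2) by blast
    then have "x \<in> EE m" using T(1) unfolding LL_iff by blast
    then show False
    proof (cases rule: EE_cases)
      case (1 b k)
      then have "j \<le> b" using x by simp
      then have "ss b k \<in> T" "ss b (Suc k) \<in> T" using T(2) 1 by auto
      then obtain k' where "k \<le> k'" "k' < Suc k" "rr b k' \<notin> T" using LL_pcD[OF T(1)] by (metis lessI)
      then show False using x 1 by (metis le_less_Suc_eq)
    next
      case (2 b k)
      then have "b < j" using x by auto
      obtain k' where "k \<le> k'" "rr b k' \<notin> T" using LL_tcD[OF T(1)] x 2 by blast
      moreover have "rr b k' \<in> BB m j" using \<open>b < j\<close> by simp
      ultimately show False using T(2) by blast
    qed
  qed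
qed

lemma spec_lower: "j \<le> m \<Longrightarrow> enat j \<in> fin_spectrum (EE m) (LL m)"
  unfolding fin_spectrum_def
  using FF_base BB_base BB_FF card_FF_diff FF_diff
  by (intro CollectI exI[of _ "FF m j"] exI[of _ "BB m j"]) (simp add: ecard_def)

lemma spec_upper: "fin_spectrum (EE m) (LL m) \<subseteq> enat ` {..m}"
proof
  fix x assume "x \<in> fin_spectrum (EE m) (LL m)"
  then obtain F B where FB: "x = ecard (F - B)" "base (fin_indep (EE m) (LL m)) F" "base (LL m) B" "B \<subseteq> F"
    unfolding fin_spectrum_def by blast
  have "F \<in> fin_indep (EE m) (LL m)" using FB(2) by (simp add: base_def maximal_in_def)
  then have "F \<subseteq> EE m" "pc F" using fin_char by blast+
  then have "finite (F - B) \<and> card (F - B) \<le> m" using diff_bound FB(3,4) by (simp add: base_def)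
  then show "x \<in> enat ` {..m}" using FB(1) by (simp add: ecard_def)
qed

lemma nf: "nearly_finitary (EE m) (LL m)"
  unfolding nearly_finitary_def
proof (intro allI impI)
  fix F B assume h: "base (fin_indep (EE m) (LL m)) F" "base (LL m) B" "B \<subseteq> F"
  have "F \<in> fin_indep (EE m) (LL m)" using h(1) by (simp add: base_def maximal_in_def)
  then have "F \<subseteq> EE m" "pc F" using fin_char by blast+
  then show "finite (F - B)" using diff_bound h(2,3) by (simp add: base_def)
qed

theorem theorem3p2p1:
  fixes n :: nat
  assumes "n \<ge> 1"
  shows "\<exists>(E :: nat set set) L. matroid E L \<and> nearly_finitary E L \<and>
           finite (fin_spectrum E L) \<and> card (fin_spectrum E L) \<ge> n"
proof (intro exI conjI)
  show "matroid (EE n) (LL n)" by (rule matroid_LL)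
  show "nearly_finitary (EE n) (LL n)" by (rule nf)
  show fin: "finite (fin_spectrum (EE n) (LL n))" using spec_upper finite_subset by blast
  have "enat ` {..n} \<subseteq> fin_spectrum (EE n) (LL n)" using spec_lower by blast
  then have "card (enat ` {..n}) \<le> card (fin_spectrum (EE n) (LL n))" using card_mono fin by blast
  moreover have "card (enat ` {..n}) = Suc n" by (simp add: card_image inj_on_def)
  ultimately show "n \<le> card (fin_spectrum (EE n) (LL n))" by simp
qed

end
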